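(* Let $V$ be a Whittaker module of type $\eta$ over $R$ with cyclic Whittaker vector $w$. Write $Z_V=(p(\Omega))$ where $p=\prod_{i=1}^m p_i^{n_i}$ with $p_1,\dots,p_m$ pairwise non-associate irreducible polynomials and $n_i\ge1$. For $i=1,\dots,m$ set $V_i=R\prod_{j\neq i}p_j(\Omega)^{n_j}w$. Then each $V_i$ is an indecomposable submodule of $V$, and \[ V=V_1\oplus\cdots\oplus V_m . \]
   Context: Let $f\in\mathbb{C}[H]$ be a polynomial. $R=R(f)$ is the associative $\mathbb{C}$-algebra generated by $E,F,H$ with relations $EF-FE=f(H)$, $HE-EH=E$, $HF-FH=-F$. Let $u\in\mathbb{C}[H]$ satisfy $f(H)=\tfrac12(u(H+1)-u(H))$ and $\Omega=2FE+u(H+1)$; the center $Z(R)$ is the polynomial ring $\mathbb{C}[\Omega]$. Let $R(E)=\mathbb{C}[E]$ and fix an algebra homomorphism $\eta:R(E)\to\mathbb{C}$ with $\eta(E)\neq0$. A vector $v$ of an $R$-module $V$ is a Whittaker vector of type $\eta$ if $Ev=\eta(E)v$; $V$ is a Whittaker module of type $\eta$ with cyclic Whittaker vector $w$ if $w$ is a Whittaker vector and $V=Rw$. $Z_V=\mathrm{Ann}_R(V)\cap Z(R)$. *)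

theory Defs
  imports "HOL-Computational_Algebra.Computational_Algebra"
begin

text \<open>An R(f)-module is modelled as a complex vector space (type 'v with scalar
multiplication s) together with linear operators E, F, H satisfying the defining
relations of R(f).  The whole type 'v is the module V.\<close>

definition op_poly :: "(complex \<Rightarrow> 'v \<Rightarrow> 'v) \<Rightarrow> complex poly \<Rightarrow> ('v \<Rightarrow> 'v) \<Rightarrow> 'v \<Rightarrow> 'v::ab_group_add"
  where "op_poly s q T v = (\<Sum>i\<le>degree q. s (coeff q i) ((T ^^ i) v))"

definition R_module ::
  "(complex \<Rightarrow> 'v \<Rightarrow> 'v) \<Rightarrow> complex poly \<Rightarrow> ('v \<Rightarrow> 'v) \<Rightarrow> ('v \<Rightarrow> 'v) \<Rightarrow> ('v::ab_group_add \<Rightarrow> 'v) \<Rightarrow> bool"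
  where "R_module s f E F H \<longleftrightarrow>
     vector_space s \<and>
     Vector_Spaces.linear s s E \<and> Vector_Spaces.linear s s F \<and> Vector_Spaces.linear s s H \<and>
     (\<forall>v. E (F v) - F (E v) = op_poly s f H v) \<and>
     (\<forall>v. H (E v) - E (H v) = E v) \<and>
     (\<forall>v. H (F v) - F (H v) = - F v)"

definition Omega_op ::
  "(complex \<Rightarrow> 'v \<Rightarrow> 'v) \<Rightarrow> complex poly \<Rightarrow> ('v \<Rightarrow> 'v) \<Rightarrow> ('v \<Rightarrow> 'v) \<Rightarrow> ('v \<Rightarrow> 'v) \<Rightarrow> 'v \<Rightarrow> 'v::ab_group_add"
  where "Omega_op s u E F H v = s 2 (F (E v)) + op_poly s u (\<lambda>x. H x + x) v"

definition is_submodule ::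
  "(complex \<Rightarrow> 'v \<Rightarrow> 'v) \<Rightarrow> ('v \<Rightarrow> 'v) \<Rightarrow> ('v \<Rightarrow> 'v) \<Rightarrow> ('v \<Rightarrow> 'v) \<Rightarrow> 'v::ab_group_add set \<Rightarrow> bool"
  where "is_submodule s E F H W \<longleftrightarrow> module.subspace s W \<and>
     (\<forall>x\<in>W. E x \<in> W \<and> F x \<in> W \<and> H x \<in> W)"

definition cyclic_sub ::
  "(complex \<Rightarrow> 'v \<Rightarrow> 'v) \<Rightarrow> ('v \<Rightarrow> 'v) \<Rightarrow> ('v \<Rightarrow> 'v) \<Rightarrow> ('v \<Rightarrow> 'v) \<Rightarrow> 'v \<Rightarrow> 'v::ab_group_add set"
  where "cyclic_sub s E F H x = \<Inter> {W. is_submodule s E F H W \<and> x \<in> W}"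

definition indecomposable_sub ::
  "(complex \<Rightarrow> 'v \<Rightarrow> 'v) \<Rightarrow> ('v \<Rightarrow> 'v) \<Rightarrow> ('v \<Rightarrow> 'v) \<Rightarrow> ('v \<Rightarrow> 'v) \<Rightarrow> 'v::ab_group_add set \<Rightarrow> bool"
  where "indecomposable_sub s E F H W \<longleftrightarrow> is_submodule s E F H W \<and> W \<noteq> {0} \<and>
     \<not> (\<exists>A B. is_submodule s E F H A \<and> is_submodule s E F H B \<and> A \<noteq> {0} \<and> B \<noteq> {0} \<and>
            A \<inter> B = {0} \<and> W = {a + b | a b. a \<in> A \<and> b \<in> B})"

definition internal_direct_sum :: "nat \<Rightarrow> (nat \<Rightarrow> 'v::ab_group_add set) \<Rightarrow> bool"
  where "internal_direct_sum m W \<longleftrightarrow>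
     (\<forall>v. \<exists>g. (\<forall>i<m. g i \<in> W i) \<and> v = (\<Sum>i<m. g i)) \<and>
     (\<forall>g. (\<forall>i<m. g i \<in> W i) \<and> (\<Sum>i<m. g i) = 0 \<longrightarrow> (\<forall>i<m. g i = 0))"

end

theory Submission imports Defs "HOL-Computational_Algebra.Field_as_Ring" begin

definition lin :: "('a::field \<Rightarrow> 'v \<Rightarrow> 'v) \<Rightarrow> ('v::ab_group_add \<Rightarrow> 'v) \<Rightarrow> bool"
  where "lin s T \<longleftrightarrow> (\<forall>x y. T (x + y) = T x + T y) \<and> (\<forall>a x. T (s a x) = s a (T x))"

context vector_space
begin

lemma lin_add: "lin scale T \<Longrightarrow> T (x + y) = T x + T y" by (simp add: lin_def)
lemma lin_scale: "lin scale T \<Longrightarrow> T (scale a x) = scale a (T x)" by (simp add: lin_def)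
lemma lin_zero: "lin scale T \<Longrightarrow> T 0 = 0"
  using lin_scale[of T 0 0] by simp
lemma lin_neg: "lin scale T \<Longrightarrow> T (- x) = - T x"
  using lin_scale[of T "-1" x] by simp
lemma lin_diff: "lin scale T \<Longrightarrow> T (x - y) = T x - T y"
  by (metis diff_conv_add_uminus lin_add lin_neg)
lemma lin_sum: "lin scale T \<Longrightarrow> T (sum g A) = (\<Sum>a\<in>A. T (g a))"
  by (induct A rule: infinite_finite_induct) (simp_all add: lin_zero lin_add)

lemma lin_id: "lin scale (\<lambda>x. x)" by (simp add: lin_def)
lemma lin_comp: "lin scale T \<Longrightarrow> lin scale U \<Longrightarrow> lin scale (\<lambda>x. T (U x))"
  by (simp add: lin_def)
lemma lin_plus: "lin scale T \<Longrightarrow> lin scale U \<Longrightarrow> lin scale (\<lambda>x. T x + U x)"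
  by (simp add: lin_def scale_right_distrib)
lemma lin_minus: "lin scale T \<Longrightarrow> lin scale U \<Longrightarrow> lin scale (\<lambda>x. T x - U x)"
  by (simp add: lin_def scale_right_diff_distrib)
lemma lin_smul: "lin scale T \<Longrightarrow> lin scale (\<lambda>x. scale a (T x))"
  by (simp add: lin_def scale_right_distrib scale_left_commute)
lemma lin_funpow: "lin scale T \<Longrightarrow> lin scale (T ^^ k)"
  by (induct k) (simp_all add: lin_def)

end

locale cvs = vector_space s for s :: "complex \<Rightarrow> 'v::ab_group_add \<Rightarrow> 'v"
begin

lemma op_poly_bound:
  assumes "degree q < N"
  shows "op_poly s q T v = (\<Sum>i<N. s (coeff q i) ((T ^^ i) v))"
proof -
  have "op_poly s q T v = (\<Sum>i<Suc (degree q). s (coeff q i) ((T ^^ i) v))"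
    unfolding op_poly_def by (simp add: lessThan_Suc_atMost)
  also have "\<dots> = (\<Sum>i<N. s (coeff q i) ((T ^^ i) v))"
    by (rule sum.mono_neutral_left) (use assms in \<open>auto simp: coeff_eq_0\<close>)
  finally show ?thesis .
qed

lemma op_poly_0[simp]: "op_poly s 0 T v = 0"
  by (simp add: op_poly_def)

lemma op_poly_pCons:
  assumes T: "lin s T"
  shows "op_poly s (pCons a q) T v = s a v + T (op_poly s q T v)"
proof -
  let ?N = "Suc (degree q)"
  have d: "degree (pCons a q) < Suc ?N"
    using degree_pCons_le[of a q] by simp
  have "op_poly s (pCons a q) T v = (\<Sum>i<Suc ?N. s (coeff (pCons a q) i) ((T ^^ i) v))"
    by (rule op_poly_bound[OF d])
  also have "\<dots> = s a v + (\<Sum>i<?N. s (coeff q i) ((T ^^ Suc i) v))"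
    by (subst sum.lessThan_Suc_shift) simp
  also have "(\<Sum>i<?N. s (coeff q i) ((T ^^ Suc i) v)) = T (\<Sum>i<?N. s (coeff q i) ((T ^^ i) v))"
    unfolding lin_sum[OF T] lin_scale[OF T] by simp
  also have "(\<Sum>i<?N. s (coeff q i) ((T ^^ i) v)) = op_poly s q T v"
    by (rule op_poly_bound[symmetric]) simp
  finally show ?thesis .
qed

lemma op_poly_const: "op_poly s [:a:] T v = s a v"
  by (simp add: op_poly_def)

lemma op_poly_1[simp]: "op_poly s 1 T v = v"
  by (simp add: op_poly_def)

lemma op_poly_lin:
  assumes T: "lin s T"
  shows "lin s (op_poly s q T)"
proof (induct q rule: pCons_induct)
  case 0 then show ?case by (simp add: lin_def)
next
  case (pCons a p)
  show ?case using pCons(2) T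
    unfolding lin_def op_poly_pCons[OF T]
    by (simp add: scale_right_distrib scale_left_commute algebra_simps)
qed

lemma op_poly_intertwine:
  assumes T1: "lin s T1" and T2: "lin s T2" and L: "lin s L"
    and c: "\<And>x. L (T1 x) = T2 (L x)"
  shows "L (op_poly s q T1 v) = op_poly s q T2 (L v)"
proof (induct q rule: pCons_induct)
  case 0 then show ?case by (simp add: lin_zero[OF L])
next
  case (pCons a p)
  show ?case
    by (simp add: op_poly_pCons[OF T1] op_poly_pCons[OF T2] lin_add[OF L] lin_scale[OF L] c pCons(2))
qed

lemma op_poly_add:
  assumes T: "lin s T"
  shows "op_poly s (p + q) T v = op_poly s p T v + op_poly s q T v"
proof (induct p arbitrary: q rule: pCons_induct)
  case 0 then show ?case by simp
next
  case (pCons a p)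
  obtain b q' where q: "q = pCons b q'" by (cases q) auto
  show ?case
    by (simp add: q op_poly_pCons[OF T] pCons(2) lin_add[OF T] scale_left_distrib algebra_simps)
qed

lemma op_poly_smult:
  assumes T: "lin s T"
  shows "op_poly s (smult a p) T v = s a (op_poly s p T v)"
proof (induct p rule: pCons_induct)
  case 0 then show ?case by simp
next
  case (pCons b p)
  show ?case
    by (simp add: op_poly_pCons[OF T] pCons(2) lin_scale[OF T] scale_right_distrib)
qed

lemma op_poly_minus:
  assumes T: "lin s T"
  shows "op_poly s (- p) T v = - op_poly s p T v"
  using op_poly_smult[OF T, of "-1" p v] by simp

lemma op_poly_diff:
  assumes T: "lin s T"
  shows "op_poly s (p - q) T v = op_poly s p T v - op_poly s q T v"
  using op_poly_add[OF T, of p "-q" v] op_poly_minus[OF T, of q v] by simp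

lemma op_poly_mult:
  assumes T: "lin s T"
  shows "op_poly s (p * q) T v = op_poly s p T (op_poly s q T v)"
proof (induct p rule: pCons_induct)
  case 0 then show ?case by simp
next
  case (pCons a p)
  have "pCons a p * q = smult a q + pCons 0 (p * q)" by (rule mult_pCons_left)
  then show ?case
    by (simp add: op_poly_add[OF T] op_poly_smult[OF T] op_poly_pCons[OF T] pCons(2))
qed

lemma op_poly_sum:
  assumes T: "lin s T"
  shows "op_poly s (sum g A) T v = (\<Sum>a\<in>A. op_poly s (g a) T v)"
  by (induct A rule: infinite_finite_induct) (simp_all add: op_poly_add[OF T])

lemma op_poly_pcompose:
  assumes T: "lin s T"
  shows "op_poly s (pcompose p q) T v = op_poly s p (op_poly s q T) v"
proof (induct p arbitrary: v rule: pCons_induct)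
  case 0 then show ?case by simp
next
  case (pCons a p)
  show ?case
    by (simp add: pcompose_pCons op_poly_add[OF T] op_poly_mult[OF T] op_poly_const
          op_poly_pCons[OF op_poly_lin[OF T]] pCons(2))
qed

lemma subspace_op_poly:
  assumes W: "subspace W" and T: "lin s T" and cl: "\<And>x. x \<in> W \<Longrightarrow> T x \<in> W"
    and x: "x \<in> W"
  shows "op_poly s q T x \<in> W"
proof (induct q rule: pCons_induct)
  case 0 then show ?case using W by (simp add: subspace_0)
next
  case (pCons a p)
  show ?case unfolding op_poly_pCons[OF T]
    by (intro subspace_add[OF W] subspace_scale[OF W] x cl pCons(2))
qed

end

locale wsetup = cvs s for s :: "complex \<Rightarrow> 'v::ab_group_add \<Rightarrow> 'v" +
  fixes f u :: "complex poly" and E F H :: "'v \<Rightarrow> 'v" and c :: complex and w :: 'v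
  assumes fu: "f = smult (1/2) (pcompose u [:1, 1:] - u)"
    and linE: "lin s E" and linF: "lin s F" and linH: "lin s H"
    and rEF: "\<And>v. E (F v) - F (E v) = op_poly s f H v"
    and rHE: "\<And>v. H (E v) - E (H v) = E v"
    and rHF: "\<And>v. H (F v) - F (H v) = - F v"
    and c_nz: "c \<noteq> 0"
    and whit: "E w = s c w"
    and cyc: "cyclic_sub s E F H w = UNIV"
begin

abbreviation "Om \<equiv> Omega_op s u E F H"
abbreviation "H1 \<equiv> (\<lambda>x. H x + x)"
abbreviation "H2 \<equiv> (\<lambda>x. H1 x + x)"
abbreviation "Tu \<equiv> op_poly s u H1"
abbreviation "Uu \<equiv> op_poly s u H"

lemma lin_H1: "lin s H1" by (rule lin_plus[OF linH lin_id])
lemma lin_H2: "lin s H2" by (rule lin_plus[OF lin_H1 lin_id])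
lemma lin_Om: "lin s Om"
  using lin_add[OF linE] lin_add[OF linF] lin_scale[OF linE] lin_scale[OF linF]
    lin_add[OF op_poly_lin[OF lin_H1]] lin_scale[OF op_poly_lin[OF lin_H1]]
  unfolding Omega_op_def lin_def by (simp add: scale_right_distrib scale_left_commute)

lemma EH: "E (H v) = H (E v) - E v" using rHE[of v] by (simp add: algebra_simps)
lemma FH: "F (H v) = H (F v) + F v" using rHF[of v] by (simp add: algebra_simps)
lemma E_H1: "E (H1 x) = H (E x)" by (simp add: lin_add[OF linE] EH)
lemma F_H: "F (H x) = H1 (F x)" by (simp add: FH)
lemma F_H1: "F (H1 x) = H2 (F x)" by (simp add: lin_add[OF linF] FH)
lemma H_H1: "H (H1 x) = H1 (H x)" by (simp add: lin_add[OF linH])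

lemma H1_eq: "op_poly s [:1, 1:] H = H1"
  by (rule ext) (simp add: op_poly_pCons[OF linH] op_poly_const lin_scale[OF linH] lin_zero[OF linH] add.commute)

lemma fH: "op_poly s f H v = s (1/2) (Tu v - Uu v)"
  by (simp add: fu op_poly_smult[OF linH] op_poly_diff[OF linH] op_poly_pcompose[OF linH] H1_eq)

lemma E_Tu: "E (Tu v) = Uu (E v)"
  by (simp only: op_poly_intertwine[of H1 H E, OF lin_H1 linH linE E_H1])
lemma F_Uu: "F (Uu v) = Tu (F v)"
  by (simp only: op_poly_intertwine[of H H1 F, OF linH lin_H1 linF F_H])
lemma F_Tu: "F (Tu v) = op_poly s u H2 (F v)"
  by (simp only: op_poly_intertwine[of H1 H2 F, OF lin_H1 lin_H2 linF F_H1])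
lemma H_Tu: "H (Tu v) = Tu (H v)"
  by (simp only: op_poly_intertwine[of H1 H1 H, OF lin_H1 lin_H1 linH H_H1])

lemma EF: "E (F v) = F (E v) + s (1/2) (Tu v - Uu v)"
  using rEF[of v] unfolding fH by (simp add: diff_eq_eq add.commute)

lemma Om_E: "E (Om v) = Om (E v)"
proof -
  have "E (Om v) = s 2 (E (F (E v))) + Uu (E v)"
    by (simp add: Omega_op_def lin_add[OF linE] lin_scale[OF linE] E_Tu)
  also have "\<dots> = s 2 (F (E (E v))) + Tu (E v)"
    by (simp add: EF scale_right_distrib scale_right_diff_distrib)
  also have "\<dots> = Om (E v)" by (simp add: Omega_op_def)
  finally show ?thesis .
qed

lemma Om_F: "F (Om v) = Om (F v)"
proof -
  have "F (Om v) = s 2 (F (F (E v))) + op_poly s u H2 (F v)"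
    by (simp add: Omega_op_def lin_add[OF linF] lin_scale[OF linF] F_Tu)
  also have "\<dots> = s 2 (F (E (F v))) + Tu (F v)"
    by (simp add: EF lin_add[OF linF] lin_scale[OF linF] lin_diff[OF linF] F_Tu F_Uu
          scale_right_distrib scale_right_diff_distrib)
  also have "\<dots> = Om (F v)" by (simp add: Omega_op_def)
  finally show ?thesis .
qed

lemma HF: "H (F x) = F (H x - x)"
  by (simp add: FH lin_diff[OF linF])
lemma HE: "H (E x) = E (H x) + E x"
  by (simp add: EH)

lemma Om_H: "H (Om v) = Om (H v)"
  by (simp add: Omega_op_def lin_add[OF linH] lin_scale[OF linH] H_Tu HF HE
      lin_add[OF linE] lin_diff[OF linE])

lemma lin_Op: "lin s (op_poly s g Om)" by (rule op_poly_lin[OF lin_Om])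
lemma Op_E: "E (op_poly s g Om v) = op_poly s g Om (E v)"
  by (simp only: op_poly_intertwine[of Om Om E, OF lin_Om lin_Om linE Om_E])
lemma Op_F: "F (op_poly s g Om v) = op_poly s g Om (F v)"
  by (simp only: op_poly_intertwine[of Om Om F, OF lin_Om lin_Om linF Om_F])
lemma Op_H: "H (op_poly s g Om v) = op_poly s g Om (H v)"
  by (simp only: op_poly_intertwine[of Om Om H, OF lin_Om lin_Om linH Om_H])

lemma submoduleD:
  assumes "is_submodule s E F H W" "x \<in> W"
  shows "E x \<in> W" "F x \<in> W" "H x \<in> W" "subspace W"
  using assms by (auto simp: is_submodule_def)

lemma sub_Om:
  assumes W: "is_submodule s E F H W" and x: "x \<in> W"
  shows "Om x \<in> W"
proof -
  have sW: "subspace W" using W by (simp add: is_submodule_def)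
  have "Tu x \<in> W"
    by (rule subspace_op_poly[OF sW lin_H1 _ x]) (intro subspace_add[OF sW] submoduleD[OF W])
  then show ?thesis unfolding Omega_op_def
    by (intro subspace_add[OF sW] subspace_scale[OF sW] submoduleD[OF W] x)
qed

lemma sub_Op:
  assumes W: "is_submodule s E F H W" and x: "x \<in> W"
  shows "op_poly s g Om x \<in> W"
  using subspace_op_poly[OF submoduleD(4)[OF W x] lin_Om sub_Om[OF W] x] .

lemma cyclic_sub_is: "is_submodule s E F H (cyclic_sub s E F H x)"
  unfolding cyclic_sub_def is_submodule_def
  by (auto intro!: subspace_Inter)

lemma cyclic_sub_mem: "x \<in> cyclic_sub s E F H x"
  unfolding cyclic_sub_def by auto

lemma cyclic_sub_least: "is_submodule s E F H W \<Longrightarrow> x \<in> W \<Longrightarrow> cyclic_sub s E F H x \<subseteq> W"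
  unfolding cyclic_sub_def by auto

lemma sub_zero: "is_submodule s E F H {0}"
  by (simp add: is_submodule_def lin_zero linE linF linH)

lemma sub_preimage:
  assumes W: "is_submodule s E F H W"
  shows "is_submodule s E F H {v. op_poly s g Om v \<in> W}"
proof -
  have sW: "subspace W" using W by (simp add: is_submodule_def)
  show ?thesis unfolding is_submodule_def
  proof (intro conjI ballI)
    show "subspace {v. op_poly s g Om v \<in> W}"
      by (rule subspaceI) (auto simp: lin_zero[OF lin_Op] lin_add[OF lin_Op] lin_scale[OF lin_Op]
          subspace_0[OF sW] subspace_add[OF sW] subspace_scale[OF sW])
  qed (auto simp: Op_E[symmetric] Op_F[symmetric] Op_H[symmetric] intro: submoduleD[OF W])
qed

lemma Op_all:
  assumes W: "is_submodule s E F H W" and g: "op_poly s g Om w \<in> W"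
  shows "op_poly s g Om v \<in> W"
  using cyclic_sub_least[OF sub_preimage[OF W], of w] g cyc by auto

lemma Op_kernel:
  assumes "op_poly s g Om w = 0" shows "op_poly s g Om v = 0"
  using Op_all[OF sub_zero, of g v] assms by simp


definition Sset :: "'v set" where "Sset = {op_poly s g Om w | g. True}"

lemma S_sub: "subspace Sset"
proof (rule subspaceI)
  show "0 \<in> Sset" unfolding Sset_def by (rule CollectI, rule exI[of _ 0]) simp
next
  fix x y assume "x \<in> Sset" "y \<in> Sset"
  then obtain g h where "x = op_poly s g Om w" "y = op_poly s h Om w" unfolding Sset_def by auto
  then show "x + y \<in> Sset" unfolding Sset_def
    by (auto intro!: exI[of _ "g + h"] simp: op_poly_add[OF lin_Om])
next
  fix a x assume "x \<in> Sset"
  then obtain g where "x = op_poly s g Om w" unfolding Sset_def by auto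
  then show "s a x \<in> Sset" unfolding Sset_def
    by (auto intro!: exI[of _ "smult a g"] simp: op_poly_smult[OF lin_Om])
qed

lemma S_w: "w \<in> Sset" unfolding Sset_def by (auto intro!: exI[of _ 1])

lemma S_Om: assumes "x \<in> Sset" shows "Om x \<in> Sset"
proof -
  obtain g where "x = op_poly s g Om w" using assms unfolding Sset_def by auto
  then show ?thesis unfolding Sset_def
    by (auto intro!: exI[of _ "pCons 0 g"] simp: op_poly_pCons[OF lin_Om])
qed

lemma S_E: "x \<in> Sset \<Longrightarrow> E x = s c x"
  unfolding Sset_def by (auto simp: Op_E whit lin_scale[OF lin_Op])

definition Dl :: "'v \<Rightarrow> 'v" where "Dl v = E v - s c v"

lemma lin_Dl: "lin s Dl"
  unfolding Dl_def[abs_def] by (rule lin_minus[OF linE lin_smul[OF lin_id]])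

lemma D_H: "Dl (H y) = H (Dl y) - Dl y - s c y"
  by (simp add: Dl_def EH lin_diff[OF linH] lin_scale[OF linH] algebra_simps)

lemma Dl_S: "x \<in> Sset \<Longrightarrow> Dl x = 0"
  by (simp add: Dl_def S_E)

primrec Mset :: "nat \<Rightarrow> 'v set" where
  "Mset 0 = {0}"
| "Mset (Suc n) = {x + H y | x y. x \<in> Sset \<and> y \<in> Mset n}"

declare Mset.simps(2)[simp del]

lemma MsetI: "x \<in> Sset \<Longrightarrow> y \<in> Mset n \<Longrightarrow> x + H y \<in> Mset (Suc n)"
  by (auto simp: Mset.simps(2))

lemma MsetE: "v \<in> Mset (Suc n) \<Longrightarrow> (\<And>x y. v = x + H y \<Longrightarrow> x \<in> Sset \<Longrightarrow> y \<in> Mset n \<Longrightarrow> P) \<Longrightarrow> P"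
  by (auto simp: Mset.simps(2))

lemma M_sub: "subspace (Mset n)"
proof (induct n)
  case 0 then show ?case by simp
next
  case (Suc n)
  show ?case
  proof (rule subspaceI)
    show "0 \<in> Mset (Suc n)"
      using MsetI[OF subspace_0[OF S_sub] subspace_0[OF Suc]] by (simp add: lin_zero[OF linH])
  next
    fix a b assume "a \<in> Mset (Suc n)" "b \<in> Mset (Suc n)"
    then obtain x y x' y' where "a = x + H y" "b = x' + H y'" "x \<in> Sset" "x' \<in> Sset"
      "y \<in> Mset n" "y' \<in> Mset n" by (metis MsetE)
    moreover have "a + b = (x + x') + H (y + y')" using calculation by (simp add: lin_add[OF linH] algebra_simps)
    ultimately show "a + b \<in> Mset (Suc n)"
      by (metis MsetI subspace_add[OF S_sub] subspace_add[OF Suc])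
  next
    fix k a assume "a \<in> Mset (Suc n)"
    then obtain x y where "a = x + H y" "x \<in> Sset" "y \<in> Mset n" by (metis MsetE)
    moreover have "s k a = s k x + H (s k y)" using calculation by (simp add: lin_scale[OF linH] scale_right_distrib)
    ultimately show "s k a \<in> Mset (Suc n)"
      by (metis MsetI subspace_scale[OF S_sub] subspace_scale[OF Suc])
  qed
qed

lemma M_mono: "Mset n \<subseteq> Mset (Suc n)"
proof (induct n)
  case 0
  have "0 + H 0 \<in> Mset (Suc 0)" by (rule MsetI[OF subspace_0[OF S_sub]]) simp
  then show ?case by (simp add: lin_zero[OF linH])
next
  case (Suc n) then show ?case by (auto elim!: MsetE intro!: MsetI)
qed

lemma M_mono_le: "n \<le> k \<Longrightarrow> Mset n \<subseteq> Mset k"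
  by (rule lift_Suc_mono_le[of Mset]) (use M_mono in auto)

lemma M_H: "v \<in> Mset n \<Longrightarrow> H v \<in> Mset (Suc n)"
  using MsetI[OF subspace_0[OF S_sub], of v n] by simp

lemma M_D: "v \<in> Mset (Suc n) \<Longrightarrow> Dl v \<in> Mset n"
proof (induct n arbitrary: v)
  case 0
  then obtain x where "v = x" "x \<in> Sset" by (auto simp: lin_zero[OF linH] elim: MsetE)
  then show ?case by (simp add: Dl_S)
next
  case (Suc n)
  then obtain x y where v: "v = x + H y" "x \<in> Sset" "y \<in> Mset (Suc n)" by (metis MsetE)
  have Dy: "Dl y \<in> Mset n" using Suc(1)[OF v(3)] .
  have "Dl v = H (Dl y) - Dl y - s c y"
    using v(1) Dl_S[OF v(2)] D_H[of y] lin_add[OF lin_Dl, of x "H y"] by simp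
  moreover have "H (Dl y) \<in> Mset (Suc n)" using M_H[OF Dy] .
  moreover have "Dl y \<in> Mset (Suc n)" using Dy M_mono by auto
  moreover have "s c y \<in> Mset (Suc n)" using subspace_scale[OF M_sub v(3)] .
  ultimately show ?case by (metis subspace_diff[OF M_sub])
qed

lemma M_Dpow: "v \<in> Mset n \<Longrightarrow> (Dl ^^ n) v = 0"
proof (induct n arbitrary: v)
  case 0 then show ?case by simp
next
  case (Suc n)
  have "(Dl ^^ Suc n) v = (Dl ^^ n) (Dl v)" by (simp only: funpow_Suc_right o_apply)
  then show ?case using Suc(1)[OF M_D[OF Suc(2)]] by simp
qed

lemma grp5: "(X::'a::ab_group_add) - A - B - C - D = X - (A + C) - (B + D)"
  by (simp add: algebra_simps)

lemma Dpow_H: "(Dl ^^ Suc k) (H y) = H ((Dl ^^ Suc k) y) - s (of_nat (Suc k)) ((Dl ^^ Suc k) y)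
   - s (of_nat (Suc k) * c) ((Dl ^^ k) y)"
proof (induct k)
  case 0 then show ?case using D_H[of y] by simp
next
  case (Suc k)
  let ?a = "(Dl ^^ Suc k) y" and ?b = "(Dl ^^ k) y" and ?K = "of_nat (Suc k) :: complex"
  have a: "Dl ?b = ?a" by simp
  have a2: "Dl ?a = (Dl ^^ Suc (Suc k)) y" by simp
  have "(Dl ^^ Suc (Suc k)) (H y) = Dl ((Dl ^^ Suc k) (H y))" by simp
  also have "\<dots> = Dl (H ?a - s ?K ?a - s (?K * c) ?b)" by (simp only: Suc)
  also have "\<dots> = Dl (H ?a) - s ?K (Dl ?a) - s (?K * c) (Dl ?b)"
    by (simp only: lin_diff[OF lin_Dl] lin_scale[OF lin_Dl])
  also have "\<dots> = H (Dl ?a) - Dl ?a - s c ?a - s ?K (Dl ?a) - s (?K * c) ?a"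
    by (simp only: a D_H)
  also have "\<dots> = H (Dl ?a) - (Dl ?a + s ?K (Dl ?a)) - (s c ?a + s (?K * c) ?a)"
    by (rule grp5)
  also have "Dl ?a + s ?K (Dl ?a) = s (of_nat (Suc (Suc k))) (Dl ?a)"
    by (simp only: of_nat_Suc[of "Suc k"] scale_left_distrib scale_one)
  also have "s c ?a + s (?K * c) ?a = s (of_nat (Suc (Suc k)) * c) ?a"
    by (simp only: of_nat_Suc[of "Suc k"] distrib_right mult_1 scale_left_distrib)
  finally show ?case by (simp only: a2)
qed

lemma Dpow_zero: "(Dl ^^ k) 0 = 0"
  by (rule lin_zero[OF lin_funpow[OF lin_Dl]])

lemma G: "y \<in> Mset (Suc n) \<Longrightarrow> (Dl ^^ n) y = 0 \<Longrightarrow> y \<in> Mset n"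
proof (induct n arbitrary: y)
  case 0 then show ?case by simp
next
  case (Suc n)
  then obtain x z where y: "y = x + H z" "x \<in> Sset" "z \<in> Mset (Suc n)"
    by (metis MsetE)
  have Dx: "(Dl ^^ Suc n) x = 0"
    by (simp only: funpow_Suc_right o_apply) (simp add: Dl_S[OF y(2)] Dpow_zero)
  have Dz: "(Dl ^^ Suc n) z = 0" by (rule M_Dpow[OF y(3)])
  have "(Dl ^^ Suc n) y = (Dl ^^ Suc n) x + (Dl ^^ Suc n) (H z)"
    by (simp only: y(1) lin_add[OF lin_funpow[OF lin_Dl]])
  also have "\<dots> = - s (of_nat (Suc n) * c) ((Dl ^^ n) z)"
    by (simp only: Dx Dpow_H Dz) (simp add: lin_zero[OF linH])
  finally have "s (of_nat (Suc n) * c) ((Dl ^^ n) z) = 0" using Suc(3) by simp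
  then have "(Dl ^^ n) z = 0" using c_nz by (simp del: of_nat_Suc)
  then have "z \<in> Mset n" by (rule Suc(1)[OF y(3)])
  then show ?case using y(1,2) MsetI by blast
qed

lemma Whit_M: "v \<in> Mset n \<Longrightarrow> Dl v = 0 \<Longrightarrow> v \<in> Sset"
proof (induct n arbitrary: v)
  case 0 then show ?case using subspace_0[OF S_sub] by simp
next
  case (Suc n)
  show ?case
  proof (cases n)
    case 0 then show ?thesis using Suc(2) by (auto simp: lin_zero[OF linH] elim: MsetE)
  next
    case (Suc k)
    have "(Dl ^^ n) v = (Dl ^^ k) (Dl v)" using Suc by (simp only: funpow_Suc_right o_apply)
    then have "(Dl ^^ n) v = 0" using \<open>Dl v = 0\<close> Dpow_zero by simp
    then have "v \<in> Mset n" using G \<open>v \<in> Mset (Suc n)\<close> by blast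
    then show ?thesis using Suc.hyps \<open>Dl v = 0\<close> by blast
  qed
qed


definition Minf :: "'v set" where "Minf = (\<Union>n. Mset n)"

lemma Minf_sub: "subspace Minf"
proof (rule subspaceI)
  show "0 \<in> Minf" unfolding Minf_def using Mset.simps(1) by blast
next
  fix x y assume "x \<in> Minf" "y \<in> Minf"
  then obtain a b where "x \<in> Mset a" "y \<in> Mset b" unfolding Minf_def by auto
  then have "x \<in> Mset (max a b)" "y \<in> Mset (max a b)" using M_mono_le[of a "max a b"] M_mono_le[of b "max a b"] by auto
  then show "x + y \<in> Minf" unfolding Minf_def using subspace_add[OF M_sub] by blast
next
  fix k x assume "x \<in> Minf"
  then show "s k x \<in> Minf" unfolding Minf_def using subspace_scale[OF M_sub] by blast
qed

lemma Minf_H: "x \<in> Minf \<Longrightarrow> H x \<in> Minf"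
  unfolding Minf_def using M_H by blast

lemma Minf_E: assumes "x \<in> Minf" shows "E x \<in> Minf"
proof -
  obtain n where x: "x \<in> Mset n" using assms unfolding Minf_def by auto
  then have "x \<in> Mset (Suc n)" using M_mono by auto
  then have "Dl x \<in> Mset n" by (rule M_D)
  moreover have "E x = Dl x + s c x" by (simp add: Dl_def)
  ultimately have "E x \<in> Mset n" using x by (metis subspace_add[OF M_sub] subspace_scale[OF M_sub])
  then show ?thesis unfolding Minf_def by auto
qed

lemma Minf_S: "x \<in> Sset \<Longrightarrow> x \<in> Minf"
  unfolding Minf_def using MsetI[of x 0 0] by (auto simp: lin_zero[OF linH])

lemma Minf_Tu: "x \<in> Minf \<Longrightarrow> Tu x \<in> Minf"
  by (rule subspace_op_poly[OF Minf_sub lin_H1])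
     (auto intro: subspace_add[OF Minf_sub] Minf_H)

lemma F_S: assumes x: "x \<in> Sset" shows "F x \<in> Minf"
proof -
  have "Om x = s (2 * c) (F x) + Tu x"
    by (simp add: Omega_op_def S_E[OF x] lin_scale[OF linF])
  then have "s (2 * c) (F x) = Om x - Tu x" by (simp add: eq_diff_eq)
  then have "s (inverse (2 * c)) (s (2 * c) (F x)) = s (inverse (2 * c)) (Om x - Tu x)" by simp
  then have "F x = s (inverse (2 * c)) (Om x - Tu x)" using c_nz by simp
  moreover have "Om x \<in> Minf" by (rule Minf_S[OF S_Om[OF x]])
  moreover have "Tu x \<in> Minf" by (rule Minf_Tu[OF Minf_S[OF x]])
  ultimately show ?thesis by (metis subspace_scale[OF Minf_sub] subspace_diff[OF Minf_sub])
qed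

lemma F_M: "v \<in> Mset n \<Longrightarrow> F v \<in> Minf"
proof (induct n arbitrary: v)
  case 0 then show ?case using subspace_0[OF Minf_sub] by (simp add: lin_zero[OF linF])
next
  case (Suc n)
  then obtain x y where v: "v = x + H y" "x \<in> Sset" "y \<in> Mset n" by (metis MsetE)
  have "F v = F x + (H (F y) + F y)" by (simp add: v(1) lin_add[OF linF] FH)
  moreover have "F y \<in> Minf" by (rule Suc(1)[OF v(3)])
  ultimately show ?case using F_S[OF v(2)]
    by (metis subspace_add[OF Minf_sub] Minf_H)
qed

lemma Minf_submodule: "is_submodule s E F H Minf"
  unfolding is_submodule_def
  using Minf_sub Minf_E Minf_H F_M by (auto simp: Minf_def)

lemma Minf_UNIV: "Minf = UNIV"
  using cyclic_sub_least[OF Minf_submodule Minf_S[OF S_w]] cyc by auto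

lemma whittaker: assumes "E v = s c v" shows "v \<in> Sset"
proof -
  obtain n where "v \<in> Mset n" using Minf_UNIV unfolding Minf_def by auto
  moreover have "Dl v = 0" using assms by (simp add: Dl_def)
  ultimately show ?thesis by (rule Whit_M)
qed

end

lemma poly_contra_aux:
  fixes a b A1 p :: "complex poly"
  assumes pr: "prime_elem p" and A1: "A1 = p ^ k" and k: "k \<ge> 1"
    and ab: "A1 dvd a * b" and s1: "A1 dvd 1 - a - b" and na: "\<not> A1 dvd a" and nb: "\<not> A1 dvd b"
  shows False
proof -
  have pA: "p dvd A1" using A1 k by (simp add: dvd_power)
  have "p dvd a * b" using pA ab by (rule dvd_trans)
  then have "p dvd a \<or> p dvd b" using pr by (simp add: prime_elem_dvd_mult_iff)
  moreover have "\<not> (p dvd a \<and> p dvd b)"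
  proof
    assume "p dvd a \<and> p dvd b"
    moreover have "p dvd 1 - a - b" using pA s1 by (rule dvd_trans)
    ultimately have "p dvd (1 - a - b) + a + b" by (meson dvd_add)
    then show False using pr prime_elem_not_unit by simp
  qed
  moreover have "p dvd a \<Longrightarrow> \<not> p dvd b \<Longrightarrow> False"
  proof -
    assume "\<not> p dvd b"
    then have "coprime p b" by (rule prime_elem_imp_coprime[OF pr])
    then have "coprime A1 b" using A1 by simp
    then have "A1 dvd a" using ab by (simp add: coprime_dvd_mult_left_iff)
    then show False using na by simp
  qed
  moreover have "p dvd b \<Longrightarrow> \<not> p dvd a \<Longrightarrow> False"
  proof -
    assume "\<not> p dvd a"
    then have "coprime p a" by (rule prime_elem_imp_coprime[OF pr])
    then have "coprime A1 a" using A1 by simp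
    then have "A1 dvd b" using ab by (simp add: coprime_dvd_mult_right_iff)
    then show False using nb by simp
  qed
  ultimately show False by blast
qed

lemma poly_contra:
  fixes al be Q A1 p :: "complex poly"
  assumes pr: "prime_elem p" and A1: "A1 = p ^ k" and k: "k \<ge> 1" and cop: "coprime A1 Q"
    and h1: "A1 * Q dvd al * be" and h2: "A1 * Q dvd Q - al - be"
    and qa: "Q dvd al" and qb: "Q dvd be"
    and na: "\<not> A1 * Q dvd al" and nb: "\<not> A1 * Q dvd be"
  shows False
proof -
  obtain a where a: "al = Q * a" using qa by (auto elim: dvdE)
  obtain b where b: "be = Q * b" using qb by (auto elim: dvdE)
  have Q0: "Q \<noteq> 0" using na a by auto
  have "A1 * Q dvd Q * (Q * (a * b))" using h1 a b by (simp add: ac_simps)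
  then have "A1 dvd Q * (a * b)" using Q0 by (simp add: mult.commute[of A1 Q])
  then have ab: "A1 dvd a * b" using cop by (simp add: coprime_dvd_mult_right_iff)
  have "Q * A1 dvd Q * (1 - a - b)" using h2 a b by (simp add: algebra_simps)
  then have s1: "A1 dvd 1 - a - b" using Q0 by simp
  have "\<not> A1 dvd a" using na a by (simp add: mult.commute[of A1 Q])
  moreover have "\<not> A1 dvd b" using nb b by (simp add: mult.commute[of A1 Q])
  ultimately show False using poly_contra_aux[OF pr A1 k ab s1] by blast
qed

lemma bezout_family:
  fixes Pp :: "nat \<Rightarrow> complex poly"
  assumes "finite I" "I \<noteq> {}" "\<forall>i\<in>I. \<forall>j\<in>I. i \<noteq> j \<longrightarrow> coprime (Pp i) (Pp j)"
  shows "\<exists>a. (\<Sum>i\<in>I. a i * (\<Prod>j\<in>I - {i}. Pp j)) = 1"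
  using assms
proof (induct I rule: finite_ne_induct)
  case (singleton x)
  show ?case by (rule exI[of _ "\<lambda>_. 1"]) simp
next
  case (insert k I)
  obtain a where a: "(\<Sum>i\<in>I. a i * (\<Prod>j\<in>I - {i}. Pp j)) = 1"
    using insert by auto
  have "coprime (Pp k) (\<Prod>j\<in>I. Pp j)"
    using insert by (auto intro!: prod_coprime_right)
  then have g: "gcd (Pp k) (\<Prod>j\<in>I. Pp j) = 1" by (simp add: coprime_iff_gcd_eq_1)
  obtain x y where xy: "bezout_coefficients (Pp k) (\<Prod>j\<in>I. Pp j) = (x, y)" by (cases "bezout_coefficients (Pp k) (\<Prod>j\<in>I. Pp j)")
  have bez: "x * Pp k + y * (\<Prod>j\<in>I. Pp j) = 1" using bezout_coefficients[OF xy] g by simp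
  define a' where "a' i = (if i = k then y else x * a i)" for i
  have s1: "(\<Sum>i\<in>I. a' i * (\<Prod>j\<in>insert k I - {i}. Pp j)) = x * Pp k * (\<Sum>i\<in>I. a i * (\<Prod>j\<in>I - {i}. Pp j))"
  proof -
    have "(\<Sum>i\<in>I. a' i * (\<Prod>j\<in>insert k I - {i}. Pp j)) = (\<Sum>i\<in>I. x * Pp k * (a i * (\<Prod>j\<in>I - {i}. Pp j)))"
    proof (rule sum.cong[OF refl])
      fix i assume i: "i \<in> I"
      then have ik: "i \<noteq> k" using insert by auto
      have "insert k I - {i} = insert k (I - {i})" using ik by auto
      then have "(\<Prod>j\<in>insert k I - {i}. Pp j) = Pp k * (\<Prod>j\<in>I - {i}. Pp j)"
        using insert by simp
      then show "a' i * (\<Prod>j\<in>insert k I - {i}. Pp j) = x * Pp k * (a i * (\<Prod>j\<in>I - {i}. Pp j))"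
        using ik by (simp add: a'_def ac_simps)
    qed
    also have "\<dots> = x * Pp k * (\<Sum>i\<in>I. a i * (\<Prod>j\<in>I - {i}. Pp j))"
      by (simp add: sum_distrib_left)
    finally show ?thesis .
  qed
  have "(\<Sum>i\<in>insert k I. a' i * (\<Prod>j\<in>insert k I - {i}. Pp j))
      = a' k * (\<Prod>j\<in>insert k I - {k}. Pp j) + (\<Sum>i\<in>I. a' i * (\<Prod>j\<in>insert k I - {i}. Pp j))"
    using insert by simp
  also have "insert k I - {k} = I" using insert by auto
  also have "a' k = y" by (simp add: a'_def)
  finally show ?case using s1 a bez by (auto intro!: exI[of _ a'] simp: ac_simps)
qed

locale wmain = wsetup +
  fixes P :: "complex poly"
  assumes ZV: "\<forall>q. (\<forall>v. op_poly s q Om v = 0) \<longleftrightarrow> P dvd q"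
begin

lemma kill_w: "op_poly s q Om w = 0 \<longleftrightarrow> P dvd q"
  using ZV Op_kernel by blast

lemma kill_sub:
  assumes PQ: "P = A1 * Q" and x: "x \<in> cyclic_sub s E F H (op_poly s Q Om w)"
  shows "op_poly s A1 Om x = 0"
proof -
  have "op_poly s A1 Om (op_poly s Q Om w) \<in> {0}"
    using kill_w[of P] by (simp add: op_poly_mult[OF lin_Om, symmetric] PQ)
  then have "cyclic_sub s E F H (op_poly s Q Om w) \<subseteq> {v. op_poly s A1 Om v \<in> {0}}"
    by (intro cyclic_sub_least sub_preimage sub_zero) simp
  then show ?thesis using x by auto
qed

lemma kill_sub_dvd:
  assumes PQ: "P = A1 * Q" and d: "A1 dvd e" and x: "x \<in> cyclic_sub s E F H (op_poly s Q Om w)"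
  shows "op_poly s e Om x = 0"
proof -
  obtain r where "e = A1 * r" using d by (rule dvdE)
  then have "e = r * A1" by (simp add: mult.commute)
  then show ?thesis by (simp add: op_poly_mult[OF lin_Om] kill_sub[OF PQ x] lin_zero[OF lin_Op])
qed


lemma indec:
  assumes PQ: "P = A1 * Q" and pr: "prime_elem p" and k: "k \<ge> 1" and A1: "A1 = p ^ k"
    and cop: "coprime A1 Q" and Q0: "Q \<noteq> 0"
  shows "indecomposable_sub s E F H (cyclic_sub s E F H (op_poly s Q Om w))"
proof -
  let ?z = "op_poly s Q Om w"
  let ?V = "cyclic_sub s E F H ?z"
  have subV: "is_submodule s E F H ?V" by (rule cyclic_sub_is)
  have zV: "?z \<in> ?V" by (rule cyclic_sub_mem)
  have p0: "p \<noteq> 0" using pr by auto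
  have A10: "A1 \<noteq> 0" using A1 p0 by simp
  have nPQ: "\<not> P dvd Q"
  proof
    assume "P dvd Q"
    then have "A1 * Q dvd 1 * Q" using PQ by simp
    then have "A1 dvd 1" using Q0 by (simp del: mult_1)
    moreover have "p dvd A1" using A1 k by (simp add: dvd_power)
    ultimately have "p dvd 1" by (rule dvd_trans[rotated])
    then show False using pr prime_elem_not_unit by blast
  qed
  have z0: "?z \<noteq> 0" using kill_w nPQ by blast
  have Vnz: "?V \<noteq> {0}" using zV z0 by auto
  have zS: "?z \<in> Sset" unfolding Sset_def by auto
  have nodec: "\<not> (\<exists>A B. is_submodule s E F H A \<and> is_submodule s E F H B \<and> A \<noteq> {0} \<and> B \<noteq> {0} \<and>
            A \<inter> B = {0} \<and> ?V = {a + b | a b. a \<in> A \<and> b \<in> B})"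
  proof
    assume "\<exists>A B. is_submodule s E F H A \<and> is_submodule s E F H B \<and> A \<noteq> {0} \<and> B \<noteq> {0} \<and>
            A \<inter> B = {0} \<and> ?V = {a + b | a b. a \<in> A \<and> b \<in> B}"
    then obtain A B where sA: "is_submodule s E F H A" and sB: "is_submodule s E F H B"
      and A0: "A \<noteq> {0}" and B0: "B \<noteq> {0}" and AB: "A \<inter> B = {0}"
      and VAB: "?V = {a + b | a b. a \<in> A \<and> b \<in> B}" by blast
    have ssA: "subspace A" and ssB: "subspace B" using sA sB by (auto simp: is_submodule_def)
    have AV: "A \<subseteq> ?V"
    proof
      fix x assume "x \<in> A"
      then show "x \<in> ?V" unfolding VAB using subspace_0[OF ssB] by force
    qed
    have BV: "B \<subseteq> ?V"
    proof
      fix x assume "x \<in> B"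
      then show "x \<in> ?V" unfolding VAB using subspace_0[OF ssA] by force
    qed
    obtain a b where ab: "?z = a + b" and aA: "a \<in> A" and bB: "b \<in> B" using zV unfolding VAB by blast
    have DaA: "Dl a \<in> A" unfolding Dl_def
      by (intro subspace_diff[OF ssA] subspace_scale[OF ssA] submoduleD[OF sA aA] aA)
    have DbB: "Dl b \<in> B" unfolding Dl_def
      by (intro subspace_diff[OF ssB] subspace_scale[OF ssB] submoduleD[OF sB bB] bB)
    have "Dl a + Dl b = 0" using Dl_S[OF zS] ab lin_add[OF lin_Dl, of a b] by simp
    then have "Dl a = - Dl b" by (simp add: eq_neg_iff_add_eq_0)
    then have "Dl a \<in> B" using DbB subspace_neg[OF ssB] by simp
    then have Da: "Dl a = 0" using DaA AB by auto
    then have Db: "Dl b = 0" using \<open>Dl a + Dl b = 0\<close> by simp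
    have "a \<in> Sset" using Da by (intro whittaker) (simp add: Dl_def)
    then obtain al where al: "a = op_poly s al Om w" unfolding Sset_def by auto
    have "b \<in> Sset" using Db by (intro whittaker) (simp add: Dl_def)
    then obtain be where be: "b = op_poly s be Om w" unfolding Sset_def by auto
    have a0: "a \<noteq> 0"
    proof
      assume "a = 0"
      then have "?z \<in> B" using ab bB by simp
      then have "?V \<subseteq> B" by (rule cyclic_sub_least[OF sB])
      then have "A \<subseteq> {0}" using AV AB by blast
      then show False using A0 subspace_0[OF ssA] by blast
    qed
    have b0: "b \<noteq> 0"
    proof
      assume "b = 0"
      then have "?z \<in> A" using ab aA by simp
      then have "?V \<subseteq> A" by (rule cyclic_sub_least[OF sA])
      then have "B \<subseteq> {0}" using BV AB by blast
      then show False using B0 subspace_0[OF ssB] by blast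
    qed
    have na: "\<not> P dvd al" using a0 al kill_w by blast
    have nb: "\<not> P dvd be" using b0 be kill_w by blast
    have "op_poly s (al * be) Om w \<in> B"
      using sub_Op[OF sB bB, of al] be by (simp add: op_poly_mult[OF lin_Om])
    moreover have "op_poly s (al * be) Om w \<in> A"
    proof -
      have "op_poly s (al * be) Om w = op_poly s be Om a"
        by (simp only: mult.commute[of al be] op_poly_mult[OF lin_Om] al)
      then show ?thesis using sub_Op[OF sA aA, of be] by simp
    qed
    ultimately have "op_poly s (al * be) Om w = 0" using AB by blast
    then have h1: "P dvd al * be" using kill_w by blast
    have "op_poly s (Q - al - be) Om w = 0"
      using ab al be by (simp add: op_poly_diff[OF lin_Om])
    then have h2: "P dvd Q - al - be" using kill_w by blast
    have "op_poly s (A1 * al) Om w = 0"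
      using kill_sub[OF PQ] AV aA al by (auto simp: op_poly_mult[OF lin_Om])
    then have "A1 * Q dvd A1 * al" using kill_w PQ by blast
    then have qa: "Q dvd al" using A10 by simp
    have "op_poly s (A1 * be) Om w = 0"
      using kill_sub[OF PQ] BV bB be by (auto simp: op_poly_mult[OF lin_Om])
    then have "A1 * Q dvd A1 * be" using kill_w PQ by blast
    then have qb: "Q dvd be" using A10 by simp
    show False using poly_contra[OF pr A1 k cop, of al be] h1 h2 qa qb na nb PQ by simp
  qed
  show ?thesis unfolding indecomposable_sub_def using subV Vnz nodec by blast
qed

lemma dsum:
  fixes Pp :: "nat \<Rightarrow> complex poly"
  assumes fin: "finite I" and ne: "I \<noteq> {}"
    and cop: "\<forall>i\<in>I. \<forall>j\<in>I. i \<noteq> j \<longrightarrow> coprime (Pp i) (Pp j)"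
    and PI: "P = (\<Prod>i\<in>I. Pp i)"
  defines "W \<equiv> (\<lambda>i. cyclic_sub s E F H (op_poly s (\<Prod>j\<in>I - {i}. Pp j) Om w))"
  shows "(\<forall>v. \<exists>g. (\<forall>i\<in>I. g i \<in> W i) \<and> v = (\<Sum>i\<in>I. g i))"
    and "(\<forall>g. (\<forall>i\<in>I. g i \<in> W i) \<and> (\<Sum>i\<in>I. g i) = 0 \<longrightarrow> (\<forall>i\<in>I. g i = 0))"
proof -
  obtain a where a: "(\<Sum>i\<in>I. a i * (\<Prod>j\<in>I - {i}. Pp j)) = 1"
    using bezout_family[OF fin ne cop] by blast
  define e where "e i = a i * (\<Prod>j\<in>I - {i}. Pp j)" for i
  have esum: "(\<Sum>i\<in>I. e i) = 1" using a by (simp add: e_def)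
  have PQ: "P = Pp i * (\<Prod>j\<in>I - {i}. Pp j)" if "i \<in> I" for i
    using PI fin that by (simp add: prod.remove)
  have idv: "x = (\<Sum>i\<in>I. op_poly s (e i) Om x)" for x
    using op_poly_sum[OF lin_Om, of e I x] esum by simp
  have eW: "op_poly s (e i) Om x \<in> W i" for i x
  proof (rule Op_all)
    show "is_submodule s E F H (W i)" unfolding W_def by (rule cyclic_sub_is)
    show "op_poly s (e i) Om w \<in> W i" unfolding W_def e_def op_poly_mult[OF lin_Om]
      by (intro sub_Op cyclic_sub_is cyclic_sub_mem)
  qed
  show "\<forall>v. \<exists>g. (\<forall>i\<in>I. g i \<in> W i) \<and> v = (\<Sum>i\<in>I. g i)"
  proof
    fix v show "\<exists>g. (\<forall>i\<in>I. g i \<in> W i) \<and> v = (\<Sum>i\<in>I. g i)"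
      by (rule exI[of _ "\<lambda>i. op_poly s (e i) Om v"]) (use idv eW in auto)
  qed
  have ekill: "op_poly s (e k) Om x = 0" if "k \<in> I" "j \<in> I" "j \<noteq> k" "x \<in> W j" for k j x
  proof (rule kill_sub_dvd[OF PQ[OF that(2)]])
    show "x \<in> cyclic_sub s E F H (op_poly s (\<Prod>j\<in>I - {j}. Pp j) Om w)" using that(4) by (simp add: W_def)
    have "Pp j dvd (\<Prod>j\<in>I - {k}. Pp j)" using that fin by (intro dvd_prodI) auto
    then show "Pp j dvd e k" unfolding e_def by simp
  qed
  show "\<forall>g. (\<forall>i\<in>I. g i \<in> W i) \<and> (\<Sum>i\<in>I. g i) = 0 \<longrightarrow> (\<forall>i\<in>I. g i = 0)"
  proof (intro allI impI ballI)
    fix g k assume g: "(\<forall>i\<in>I. g i \<in> W i) \<and> (\<Sum>i\<in>I. g i) = 0" and k: "k \<in> I"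
    have gk: "g k \<in> W k" using g k by blast
    have n1: "(\<Sum>j\<in>I - {k}. op_poly s (e j) Om (g k)) = 0"
      by (rule sum.neutral) (auto intro: ekill[OF _ k _ gk])
    have n2: "(\<Sum>j\<in>I - {k}. op_poly s (e k) Om (g j)) = 0"
      by (rule sum.neutral) (use g in \<open>auto intro: ekill[OF k]\<close>)
    have "g k = (\<Sum>j\<in>I. op_poly s (e j) Om (g k))" by (rule idv)
    also have "\<dots> = op_poly s (e k) Om (g k)"
      using sum.remove[OF fin k, of "\<lambda>j. op_poly s (e j) Om (g k)"] n1 by simp
    also have "\<dots> = (\<Sum>j\<in>I. op_poly s (e k) Om (g j))"
      using sum.remove[OF fin k, of "\<lambda>j. op_poly s (e k) Om (g j)"] n2 by simp
    also have "\<dots> = op_poly s (e k) Om (\<Sum>j\<in>I. g j)"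
      by (rule lin_sum[OF lin_Op, symmetric])
    also have "\<dots> = 0" using g lin_zero[OF lin_Op] by simp
    finally show "g k = 0" .
  qed
qed

end

lemma linear_lin:
  assumes "Vector_Spaces.linear s s T" shows "lin s T"
proof -
  have "module_hom s s T" using assms by (simp add: module_hom_iff_linear)
  then show ?thesis by (simp add: lin_def module_hom.add module_hom.scale)
qed

lemma irr_dvd_sym:
  fixes p q :: "complex poly"
  assumes p: "irreducible p" and q: "irreducible q" and d: "p dvd q"
  shows "q dvd p"
proof -
  obtain k where qk: "q = p * k" using d by (rule dvdE)
  have "\<not> p dvd 1" using p by (rule irreducible_not_unit)
  then have "k dvd 1" using irreducibleD[OF q qk] by blast
  moreover have "q dvd p * k" using qk by simp
  ultimately show "q dvd p" by (simp add: dvd_mult_unit_iff)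
qed

theorem mainTheorem10:
  fixes s :: "complex \<Rightarrow> 'v::ab_group_add \<Rightarrow> 'v"
    and f u :: "complex poly"
    and E F H :: "'v \<Rightarrow> 'v"
    and c :: complex and w :: 'v
    and m :: nat and p :: "nat \<Rightarrow> complex poly" and n :: "nat \<Rightarrow> nat" and P :: "complex poly"
  assumes fu: "f = smult (1/2) (pcompose u [:1, 1:] - u)"
    and Rmod: "R_module s f E F H"
    and c_nz: "c \<noteq> 0"
    and whit: "E w = s c w"
    and cyc: "cyclic_sub s E F H w = UNIV"
    and ZV: "\<forall>q. (\<forall>v. op_poly s q (Omega_op s u E F H) v = 0) \<longleftrightarrow> P dvd q"
    and P_def: "P = (\<Prod>i<m. p i ^ n i)"
    and irr: "\<forall>i<m. irreducible (p i)"
    and nonassoc: "\<forall>i<m. \<forall>j<m. i \<noteq> j \<longrightarrow> \<not> (p i dvd p j \<and> p j dvd p i)"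
    and n_pos: "\<forall>i<m. n i \<ge> 1"
  shows "(\<forall>i<m. indecomposable_sub s E F H
            (cyclic_sub s E F H
               (op_poly s (\<Prod>j\<in>{..<m} - {i}. p j ^ n j) (Omega_op s u E F H) w)))
       \<and> internal_direct_sum m (\<lambda>i. cyclic_sub s E F H
               (op_poly s (\<Prod>j\<in>{..<m} - {i}. p j ^ n j) (Omega_op s u E F H) w))"
proof -
  have vs: "vector_space s" and lE: "Vector_Spaces.linear s s E" and lF: "Vector_Spaces.linear s s F"
    and lH: "Vector_Spaces.linear s s H"
    and rEF: "\<And>v. E (F v) - F (E v) = op_poly s f H v"
    and rHE: "\<And>v. H (E v) - E (H v) = E v"
    and rHF: "\<And>v. H (F v) - F (H v) = - F v"
    using Rmod by (auto simp: R_module_def)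
  interpret W: wmain s f u E F H c w P
    unfolding wmain_def wmain_axioms_def wsetup_def wsetup_axioms_def cvs_def
    using vs linear_lin[OF lE] linear_lin[OF lF] linear_lin[OF lH] rEF rHE rHF fu c_nz whit cyc ZV
    by blast
  define Pp where "Pp j = p j ^ n j" for j
  have pr: "prime_elem (p i)" if "i < m" for i using irr that by (simp add: prime_elem_iff_irreducible)
  have cop: "coprime (Pp i) (Pp j)" if "i < m" "j < m" "i \<noteq> j" for i j
  proof -
    have "\<not> p i dvd p j"
      using irr_dvd_sym[of "p i" "p j"] irr nonassoc that by blast
    then have "coprime (p i) (p j)" by (rule prime_elem_imp_coprime[OF pr[OF that(1)]])
    then show ?thesis by (simp add: Pp_def)
  qed
  have Pp0: "Pp j \<noteq> 0" if "j < m" for j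
    using pr[OF that] by (auto simp: Pp_def)
  have PI: "P = (\<Prod>i\<in>{..<m}. Pp i)" by (simp add: P_def Pp_def)
  have part1: "\<forall>i<m. indecomposable_sub s E F H
            (cyclic_sub s E F H
               (op_poly s (\<Prod>j\<in>{..<m} - {i}. p j ^ n j) (Omega_op s u E F H) w))"
  proof (intro allI impI)
    fix i assume i: "i < m"
    have PQ: "P = Pp i * (\<Prod>j\<in>{..<m} - {i}. Pp j)"
      using PI i by (simp add: prod.remove)
    have cQ: "coprime (Pp i) (\<Prod>j\<in>{..<m} - {i}. Pp j)"
      using cop i by (auto intro!: prod_coprime_right)
    have Q0: "(\<Prod>j\<in>{..<m} - {i}. Pp j) \<noteq> 0" using Pp0 by auto
    have "indecomposable_sub s E F H (cyclic_sub s E F H (op_poly s (\<Prod>j\<in>{..<m} - {i}. Pp j) (Omega_op s u E F H) w))"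
      by (rule W.indec[OF PQ pr[OF i] _ Pp_def cQ Q0]) (use n_pos i in auto)
    then show "indecomposable_sub s E F H
            (cyclic_sub s E F H
               (op_poly s (\<Prod>j\<in>{..<m} - {i}. p j ^ n j) (Omega_op s u E F H) w))"
      by (simp add: Pp_def)
  qed
  have part2: "internal_direct_sum m (\<lambda>i. cyclic_sub s E F H
               (op_poly s (\<Prod>j\<in>{..<m} - {i}. p j ^ n j) (Omega_op s u E F H) w))"
  proof (cases "m = 0")
    case True
    then have "P = 1" using P_def by simp
    then have "\<forall>v. op_poly s 1 (Omega_op s u E F H) v = 0" using ZV by simp
    then have "\<forall>v::'v. v = 0" by simp
    then show ?thesis using True by (simp add: internal_direct_sum_def)
  next
    case False
    have ne: "{..<m} \<noteq> {}" using False by auto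
    have cop': "\<forall>i\<in>{..<m}. \<forall>j\<in>{..<m}. i \<noteq> j \<longrightarrow> coprime (Pp i) (Pp j)" using cop by auto
    note d = W.dsum[OF finite_lessThan ne cop' PI]
    show ?thesis unfolding internal_direct_sum_def
      using d[unfolded Ball_def lessThan_iff] by (simp add: Pp_def)
  qed
  show ?thesis using part1 part2 by blast
qed

end
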